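(* Let $\mathcal C\subseteq V$ be a subspace of dimension $K=|\mathcal C|$ with orthogonal projector $P$. Then: (1) $A_i(P,P)\ge0$ for all $i$; (2) $\sum_iA_i(P,P)=K$; (3) $\sum_iB_i(P,P)=K^2$; (4) if some sector $\mathcal E_0=\mathrm{span}\{I\}$, then $A_0(P,P)=K^2/\dim V$ and $B_0(P,P)=K/\dim V$; (5) for every $i$, $A_i(P,P)\le K\,B_i(P,P)$, with equality if and only if $\mathcal C$ detects every error in $\mathcal E_i$.
   Context: Let $V$ be a finite-dimensional complex Hilbert space and $\mathcal L(V)$ the space of linear operators on $V$, equipped with the Hilbert–Schmidt inner product $\langle X_1,X_2\rangle=\mathrm{Tr}(X_1^\dagger X_2)$. Fix an orthogonal decomposition $\mathcal L(V)=\bigoplus_{i\in I}\mathcal E_i$. For each $i$, let $\Pi_i$ be the orthogonal projector of $\mathcal L(V)$ onto $\mathcal E_i$, fix an orthonormal basis $\mathcal B_i$ of $\mathcal E_i$, and let $\mathrm{Twirl}_i(X)=\sum_{E\in\mathcal B_i}E^\dagger XE$. Define $A_i(X_1,X_2)=\langle X_1,\Pi_i(X_2)\rangle$ and $B_i(X_1,X_2)=\langle X_1,\mathrm{Twirl}_i(X_2)\rangle$. A subspace $\mathcal C\subseteq V$ with orthogonal projector $P$ detects every error in a subspace $\mathcal F\subseteq\mathcal L(V)$ if for every $E\in\mathcal F$ there is a scalar $c_E\in\mathbb C$ with $PEP=c_EP$. *)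

theory Defs
  imports "HOL-Analysis.Analysis" "HOL-Library.Complex_Order"
begin

text \<open>V = complex^'n (dim V = CARD('n)); L(V) = complex^'n^'n (matrices).\<close>

definition mscale :: "complex \<Rightarrow> complex^'n^'n \<Rightarrow> complex^'n^'n" where
  "mscale c A = (\<chi> i j. c * A$i$j)"

definition adj :: "complex^'n^'n \<Rightarrow> complex^'n^'n" where
  "adj A = (\<chi> i j. cnj (A$j$i))"

definition hs :: "complex^'n^'n \<Rightarrow> complex^'n^'n \<Rightarrow> complex" where
  "hs X Y = trace (adj X ** Y)"

definition msubspace :: "(complex^'n^'n) set \<Rightarrow> bool" where
  "msubspace S \<longleftrightarrow> 0 \<in> S \<and> (\<forall>x\<in>S. \<forall>y\<in>S. x + y \<in> S) \<and> (\<forall>c. \<forall>x\<in>S. mscale c x \<in> S)"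

definition mspan :: "(complex^'n^'n) set \<Rightarrow> (complex^'n^'n) set" where
  "mspan Bs = {(\<Sum>E\<in>Bs. mscale (f E) E) | f. True}"

definition orthonormal_basis :: "(complex^'n^'n) set \<Rightarrow> (complex^'n^'n) set \<Rightarrow> bool" where
  "orthonormal_basis Bs S \<longleftrightarrow> finite Bs \<and> Bs \<subseteq> S \<and> S \<subseteq> mspan Bs \<and>
     (\<forall>E\<in>Bs. \<forall>F\<in>Bs. hs E F = (if E = F then 1 else 0))"

definition orth_decomp :: "'i set \<Rightarrow> ('i \<Rightarrow> (complex^'n^'n) set) \<Rightarrow> bool" where
  "orth_decomp I E \<longleftrightarrow> (\<forall>i\<in>I. msubspace (E i)) \<and>
     (\<forall>i\<in>I. \<forall>j\<in>I. i \<noteq> j \<longrightarrow> (\<forall>X\<in>E i. \<forall>Y\<in>E j. hs X Y = 0)) \<and>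
     (\<forall>X. \<exists>Y. (\<forall>i\<in>I. Y i \<in> E i) \<and> X = (\<Sum>i\<in>I. Y i))"

definition orth_proj :: "(complex^'n^'n) set \<Rightarrow> complex^'n^'n \<Rightarrow> complex^'n^'n" where
  "orth_proj S X = (THE Y. Y \<in> S \<and> (\<forall>Z\<in>S. hs Z (X - Y) = 0))"

definition twirl :: "(complex^'n^'n) set \<Rightarrow> complex^'n^'n \<Rightarrow> complex^'n^'n" where
  "twirl Bs X = (\<Sum>E\<in>Bs. adj E ** X ** E)"

definition Aform :: "(complex^'n^'n) set \<Rightarrow> complex^'n^'n \<Rightarrow> complex^'n^'n \<Rightarrow> complex" where
  "Aform S X1 X2 = hs X1 (orth_proj S X2)"

definition Bform :: "(complex^'n^'n) set \<Rightarrow> complex^'n^'n \<Rightarrow> complex^'n^'n \<Rightarrow> complex" where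
  "Bform Bs X1 X2 = hs X1 (twirl Bs X2)"

definition is_orth_projector :: "complex^'n^'n \<Rightarrow> (complex^'n) set \<Rightarrow> bool" where
  "is_orth_projector P C \<longleftrightarrow> adj P = P \<and> P ** P = P \<and> range (\<lambda>v. P *v v) = C"

definition detects :: "complex^'n^'n \<Rightarrow> (complex^'n^'n) set \<Rightarrow> bool" where
  "detects P F \<longleftrightarrow> (\<forall>E\<in>F. \<exists>c. P ** E ** P = mscale c P)"

end

theory Submission
  imports Defs
begin


lemma trace_idem_dim:
  fixes P :: "'a::field^'n^'n"
  assumes PP: "P ** P = P" and rng: "range (\<lambda>v. P *v v) = C"
  shows "trace P = of_nat (vec.dim C)"
proof -
  obtain B where BC: "B \<subseteq> C" and ind: "vec.independent B" and CB: "C \<subseteq> vec.span B"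
    and card: "card B = vec.dim C" by (rule vec.basis_exists)
  have fin: "finite B" using ind by (rule vec.finiteI_independent)
  define R where "R v = vec.representation B (P *v v)" for v
  have sp: "P *v v \<in> vec.span B" for v using rng CB by auto
  have exp: "P *v v = (\<Sum>b\<in>B. R v b *s b)" for v
    unfolding R_def by (rule vec.sum_representation_eq[symmetric, OF ind sp fin order_refl])
  have fixb: "P *v b = b" if "b \<in> B" for b
  proof -
    from that BC rng obtain w where "b = P *v w" by auto
    then show ?thesis by (simp add: matrix_vector_mul_assoc PP)
  qed
  have Rb: "R b b' = (if b' = b then 1 else 0)" if "b \<in> B" for b b'
    unfolding R_def fixb[OF that] using vec.representation_basis[OF ind that] by simp
  have Rlin: "R (\<Sum>i\<in>UNIV. c i *s x i) b = (\<Sum>i\<in>UNIV. c i * R (x i) b)" for c x b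
  proof -
    have "P *v (\<Sum>i\<in>UNIV. c i *s x i) = (\<Sum>i\<in>UNIV. c i *s (P *v x i))"
      by (simp add: vec.sum vec.scale)
    then show ?thesis unfolding R_def
      by (simp add: vec.representation_sum[OF ind] vec.representation_scale[OF ind sp] vec.span_scale[OF sp])
  qed
  have Pij: "P $ i $ j = (\<Sum>b\<in>B. R (axis j 1) b * b $ i)" for i j
  proof -
    have "P $ i $ j = (P *v axis j 1) $ i"
      by (simp add: matrix_vector_mult_def axis_def if_distrib cong: if_cong)
    also have "\<dots> = (\<Sum>b\<in>B. R (axis j 1) b * b $ i)"
      by (subst exp) (simp add: sum_component)
    finally show ?thesis .
  qed
  have "trace P = (\<Sum>i\<in>UNIV. \<Sum>b\<in>B. R (axis i 1) b * b $ i)"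
    by (simp add: trace_def Pij)
  also have "\<dots> = (\<Sum>b\<in>B. \<Sum>i\<in>UNIV. b $ i * R (axis i 1) b)"
    by (subst sum.swap) (simp add: mult.commute)
  also have "\<dots> = (\<Sum>b\<in>B. R b b)"
    by (rule sum.cong[OF refl]) (simp add: Rlin[symmetric] basis_expansion)
  also have "\<dots> = (\<Sum>b\<in>B. 1)"
    by (rule sum.cong[OF refl]) (simp add: Rb)
  finally show ?thesis using card by simp
qed


type_synonym 'n cm = "complex^'n^'n"

lemma mscale_nth[simp]: "mscale c A $ i $ j = c * A $ i $ j"
  by (simp add: mscale_def)
lemma adj_nth[simp]: "adj A $ i $ j = cnj (A $ j $ i)"
  by (simp add: adj_def)
lemma mmult_nth: "(A ** B) $ i $ j = (\<Sum>k\<in>UNIV. A $ i $ k * B $ k $ j)"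
  by (simp add: matrix_matrix_mult_def)
lemma mat_nth: "(mat c :: 'a::zero^'n^'n) $ i $ j = (if i = j then c else 0)"
  by (simp add: mat_def)

lemma hs_expand: "hs X Y = (\<Sum>i\<in>UNIV. \<Sum>j\<in>UNIV. cnj (X $ i $ j) * Y $ i $ j)"
  unfolding hs_def trace_def by (simp add: mmult_nth) (rule sum.swap)

lemma hs_add2: "hs X (Y + Z) = hs X Y + hs X Z"
  by (simp add: hs_expand algebra_simps sum.distrib)
lemma hs_diff2: "hs X (Y - Z) = hs X Y - hs X Z"
  by (simp add: hs_expand algebra_simps sum_subtractf)
lemma hs_scale2: "hs X (mscale c Y) = c * hs X Y"
  by (simp add: hs_expand sum_distrib_left algebra_simps)
lemma hs_zero2: "hs X 0 = 0"
  by (simp add: hs_expand)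
lemma hs_sum2: "hs X (sum f S) = (\<Sum>s\<in>S. hs X (f s))"
  by (induction S rule: infinite_finite_induct) (auto simp: hs_zero2 hs_add2)
lemma hs_cnj: "hs Y X = cnj (hs X Y)"
  by (simp add: hs_expand mult.commute)
lemma hs_add1: "hs (Y + Z) X = hs Y X + hs Z X"
  by (simp add: hs_expand algebra_simps sum.distrib)
lemma hs_diff1: "hs (Y - Z) X = hs Y X - hs Z X"
  by (simp add: hs_expand algebra_simps sum_subtractf)
lemma hs_scale1: "hs (mscale c Y) X = cnj c * hs Y X"
  by (simp add: hs_expand sum_distrib_left algebra_simps)
lemma hs_sum1: "hs (sum f S) X = (\<Sum>s\<in>S. hs (f s) X)"
proof -
  have "hs (sum f S) X = cnj (hs X (sum f S))" by (rule hs_cnj)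
  also have "\<dots> = (\<Sum>s\<in>S. cnj (hs X (f s)))" by (simp add: hs_sum2)
  also have "\<dots> = (\<Sum>s\<in>S. hs (f s) X)" by (metis hs_cnj)
  finally show ?thesis .
qed

definition nm :: "complex^'n^'n \<Rightarrow> real" where
  "nm X = (\<Sum>i\<in>UNIV. \<Sum>j\<in>UNIV. (cmod (X $ i $ j))^2)"

lemma hs_self: "hs X X = complex_of_real (nm X)"
proof -
  have *: "cnj z * z = (complex_of_real (cmod z))^2" for z
    using complex_norm_square[of z] by (simp add: mult.commute)
  show ?thesis by (simp add: hs_expand nm_def *)
qed

lemma nm_nonneg: "0 \<le> nm X"
  by (simp add: nm_def sum_nonneg)

lemma nm_zero: "nm X = 0 \<longleftrightarrow> X = 0"
proof
  assume "nm X = 0"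
  then have "\<forall>i\<in>UNIV. (\<Sum>j\<in>UNIV. (cmod (X $ i $ j))^2) = 0"
    unfolding nm_def by (subst sum_nonneg_eq_0_iff[symmetric]) (auto intro: sum_nonneg)
  then have "\<forall>i j. (cmod (X $ i $ j))^2 = 0"
    by (simp add: sum_nonneg_eq_0_iff)
  then show "X = 0" by (simp add: vec_eq_iff)
qed (simp add: nm_def)

lemma mscale_mscale[simp]: "mscale c (mscale d X) = mscale (c * d) X"
  by (simp add: vec_eq_iff)
lemma mscale_mult_left: "mscale c X ** Y = mscale c (X ** Y)"
  by (simp add: vec_eq_iff mmult_nth sum_distrib_left algebra_simps)
lemma mscale_mult_right: "X ** mscale c Y = mscale c (X ** Y)"
  by (simp add: vec_eq_iff mmult_nth sum_distrib_left algebra_simps)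
lemma adj_mscale: "adj (mscale c X) = mscale (cnj c) (adj X)"
  by (simp add: vec_eq_iff)
lemma adj_mat1: "adj (mat 1) = (mat 1 :: complex^'n^'n)"
  by (simp add: vec_eq_iff mat_nth)
lemma adj_adj[simp]: "adj (adj X) = X"
  by (simp add: vec_eq_iff)
lemma adj_mult: "adj (X ** Y) = adj Y ** adj X"
  by (simp add: vec_eq_iff mmult_nth mult.commute)
lemma trace_mscale: "trace (mscale c X) = c * trace X"
  by (simp add: trace_def sum_distrib_left)
lemma matrix_add_rdistrib: "(A + B) ** (C::complex^'n^'n) = A ** C + B ** C"
  by (simp add: vec_eq_iff mmult_nth distrib_right sum.distrib)
lemma mult_sum_left: "(sum f S) ** (Y::complex^'n^'n) = (\<Sum>s\<in>S. f s ** Y)"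
  by (induction S rule: infinite_finite_induct) (auto simp: matrix_add_rdistrib)
lemma mult_sum_right: "Y ** (sum f S) = (\<Sum>s\<in>S. Y ** f s)"
  by (induction S rule: infinite_finite_induct) (auto simp: matrix_add_ldistrib)
lemma mscale_sum: "(\<Sum>s\<in>S. mscale (f s) X) = mscale (sum f S) X"
  by (induction S rule: infinite_finite_induct) (auto simp: vec_eq_iff algebra_simps)
lemma hs_mat1: "hs (mat 1) X = trace X"
  by (simp add: hs_def adj_mat1)
lemma trace_mat1: "trace (mat 1 :: complex^'n^'n) = of_nat CARD('n)"
  by (rule trace_I)

lemma msub_sum:
  assumes "msubspace S" "\<And>x. x \<in> A \<Longrightarrow> f x \<in> S"
  shows "sum f A \<in> S"
  using assms(2)
  by (induction A rule: infinite_finite_induct) (use assms(1) in \<open>auto simp: msubspace_def\<close>)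

lemma mspan_expand:
  assumes onb: "orthonormal_basis Bs S" and X: "X \<in> mspan Bs"
  shows "X = (\<Sum>B\<in>Bs. mscale (hs B X) B)"
proof -
  from X obtain f where Xf: "X = (\<Sum>E\<in>Bs. mscale (f E) E)" unfolding mspan_def by auto
  have fin: "finite Bs" and orth: "\<forall>E\<in>Bs. \<forall>F\<in>Bs. hs E F = (if E = F then 1 else 0)"
    using onb unfolding orthonormal_basis_def by auto
  have "hs B X = f B" if "B \<in> Bs" for B
  proof -
    have "hs B X = (\<Sum>E\<in>Bs. f E * (if B = E then 1 else 0))"
      unfolding Xf hs_sum2 hs_scale2 using orth that by (intro sum.cong) auto
    also have "\<dots> = f B" using fin that by (simp add: if_distrib cong: if_cong)
    finally show ?thesis .
  qed
  then show ?thesis unfolding Xf[symmetric] by (subst Xf) (intro sum.cong, auto)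
qed



lemma onb_props:
  assumes "orthonormal_basis Bs S"
  shows "finite Bs" "Bs \<subseteq> S" "S \<subseteq> mspan Bs" "\<And>E F. E \<in> Bs \<Longrightarrow> F \<in> Bs \<Longrightarrow> hs E F = (if E = F then 1 else 0)"
  using assms unfolding orthonormal_basis_def by auto

lemma proj_char:
  assumes sub: "msubspace S" and onb: "orthonormal_basis Bs S" and Y: "Y \<in> S"
  shows "(\<forall>Z\<in>S. hs Z (X - Y) = 0) \<longleftrightarrow> Y = (\<Sum>B\<in>Bs. mscale (hs B X) B)"
proof
  assume h: "\<forall>Z\<in>S. hs Z (X - Y) = 0"
  have "Y = (\<Sum>B\<in>Bs. mscale (hs B Y) B)"
    using mspan_expand[OF onb] Y onb_props(3)[OF onb] by auto
  also have "\<dots> = (\<Sum>B\<in>Bs. mscale (hs B X) B)"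
  proof (rule sum.cong[OF refl])
    fix B assume "B \<in> Bs"
    then have "hs B (X - Y) = 0" using h onb_props(2)[OF onb] by auto
    then show "mscale (hs B Y) B = mscale (hs B X) B" by (simp add: hs_diff2)
  qed
  finally show "Y = (\<Sum>B\<in>Bs. mscale (hs B X) B)" .
next
  assume Yd: "Y = (\<Sum>B\<in>Bs. mscale (hs B X) B)"
  have hB: "hs B' (X - Y) = 0" if B': "B' \<in> Bs" for B'
  proof -
    have "hs B' Y = (\<Sum>B\<in>Bs. hs B X * (if B' = B then 1 else 0))"
      unfolding Yd hs_sum2 hs_scale2 using onb_props(4)[OF onb] B' by (intro sum.cong) auto
    also have "\<dots> = hs B' X" using onb_props(1)[OF onb] B' by (simp add: if_distrib cong: if_cong)
    finally show ?thesis by (simp add: hs_diff2)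
  qed
  show "\<forall>Z\<in>S. hs Z (X - Y) = 0"
  proof
    fix Z assume "Z \<in> S"
    then have "Z = (\<Sum>B\<in>Bs. mscale (hs B Z) B)"
      using mspan_expand[OF onb] onb_props(3)[OF onb] by auto
    then have "hs Z (X - Y) = (\<Sum>B\<in>Bs. cnj (hs B Z) * hs B (X - Y))"
      by (metis (no_types, lifting) hs_scale1 hs_sum1 sum.cong)
    also have "\<dots> = 0" using hB by simp
    finally show "hs Z (X - Y) = 0" .
  qed
qed

lemma proj_sum_in:
  assumes sub: "msubspace S" and onb: "orthonormal_basis Bs S"
  shows "(\<Sum>B\<in>Bs. mscale (hs B X) B) \<in> S"
  by (rule msub_sum[OF sub]) (use sub onb_props(2)[OF onb] in \<open>auto simp: msubspace_def\<close>)

lemma proj_formula: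
  assumes sub: "msubspace S" and onb: "orthonormal_basis Bs S"
  shows "orth_proj S X = (\<Sum>B\<in>Bs. mscale (hs B X) B)"
  unfolding orth_proj_def
  by (rule the_equality) (use proj_char[OF sub onb] proj_sum_in[OF sub onb] in auto)

lemma proj_unique:
  assumes sub: "msubspace S" and onb: "orthonormal_basis Bs S" and Y: "Y \<in> S"
    and h: "\<forall>Z\<in>S. hs Z (X - Y) = 0"
  shows "orth_proj S X = Y"
  using proj_formula[OF sub onb] proj_char[OF sub onb Y] h by simp

lemma completeness:
  assumes fin: "finite I" and od: "orth_decomp I E"
    and onb: "\<And>i. i \<in> I \<Longrightarrow> orthonormal_basis (Bs i) (E i)"
  shows "X = (\<Sum>i\<in>I. \<Sum>B\<in>Bs i. mscale (hs B X) B)"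
proof -
  from od obtain Y where Y: "\<forall>i\<in>I. Y i \<in> E i" and XY: "X = (\<Sum>i\<in>I. Y i)"
    unfolding orth_decomp_def by blast
  have orth: "\<And>i j X Y. i \<in> I \<Longrightarrow> j \<in> I \<Longrightarrow> i \<noteq> j \<Longrightarrow> X \<in> E i \<Longrightarrow> Y \<in> E j \<Longrightarrow> hs X Y = 0"
    using od unfolding orth_decomp_def by blast
  have "Y i = (\<Sum>B\<in>Bs i. mscale (hs B X) B)" if i: "i \<in> I" for i
  proof -
    have "Y i = (\<Sum>B\<in>Bs i. mscale (hs B (Y i)) B)"
      using mspan_expand[OF onb[OF i]] Y i onb_props(3)[OF onb[OF i]] by auto
    also have "\<dots> = (\<Sum>B\<in>Bs i. mscale (hs B X) B)"
    proof (rule sum.cong[OF refl])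
      fix B assume B: "B \<in> Bs i"
      then have BE: "B \<in> E i" using onb_props(2)[OF onb[OF i]] by auto
      have "hs B X = (\<Sum>j\<in>I. hs B (Y j))" unfolding XY hs_sum2 ..
      also have "\<dots> = hs B (Y i) + (\<Sum>j\<in>I - {i}. hs B (Y j))"
        using fin i by (simp add: sum.remove)
      also have "(\<Sum>j\<in>I - {i}. hs B (Y j)) = 0"
        using orth[OF i _ _ BE] Y by (intro sum.neutral) auto
      finally show "mscale (hs B (Y i)) B = mscale (hs B X) B" by simp
    qed
    finally show ?thesis .
  qed
  then show ?thesis unfolding XY by (intro sum.cong) auto
qed

lemma sum_proj:
  assumes fin: "finite I" and od: "orth_decomp I E"
    and onb: "\<And>i. i \<in> I \<Longrightarrow> orthonormal_basis (Bs i) (E i)"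
  shows "(\<Sum>i\<in>I. orth_proj (E i) X) = X"
proof -
  have sub: "\<And>i. i \<in> I \<Longrightarrow> msubspace (E i)" using od unfolding orth_decomp_def by auto
  show ?thesis
    using completeness[OF fin od onb, of X] proj_formula[OF sub onb] by simp
qed

definition elem :: "'n \<Rightarrow> 'n \<Rightarrow> complex^'n^'n" where
  "elem b a = (\<chi> p q. if p = b \<and> q = a then 1 else 0)"

lemma hs_elem: "hs B (elem b a) = cnj (B $ b $ a)"
proof -
  have *: "cnj (B $ i $ j) * (if i = b \<and> j = a then 1 else 0) = (if j = a then (if i = b then cnj (B $ b $ a) else 0) else 0)" for i j
    by auto
  show ?thesis by (simp add: hs_expand elem_def * if_distrib[of "\<lambda>x. sum x _"])
qed

lemma completeness_entry:
  assumes fin: "finite I" and od: "orth_decomp I E"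
    and onb: "\<And>i. i \<in> I \<Longrightarrow> orthonormal_basis (Bs i) (E i)"
  shows "(\<Sum>i\<in>I. \<Sum>B\<in>Bs i. cnj (B $ b $ a) * B $ c $ d) = (if c = b \<and> d = a then 1 else 0)"
proof -
  have "elem b a $ c $ d = (\<Sum>i\<in>I. \<Sum>B\<in>Bs i. mscale (hs B (elem b a)) B) $ c $ d"
    using completeness[OF fin od onb, of "elem b a"] by simp
  also have "\<dots> = (\<Sum>i\<in>I. \<Sum>B\<in>Bs i. cnj (B $ b $ a) * B $ c $ d)"
    by (simp add: hs_elem)
  finally show ?thesis by (simp add: elem_def)
qed

lemma twirl_sum:
  assumes fin: "finite I" and od: "orth_decomp I E"
    and onb: "\<And>i. i \<in> I \<Longrightarrow> orthonormal_basis (Bs i) (E i)"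
  shows "(\<Sum>i\<in>I. twirl (Bs i) X) = mscale (trace X) (mat 1)"
proof -
  have "(\<Sum>i\<in>I. twirl (Bs i) X) $ a $ d = mscale (trace X) (mat 1) $ a $ d" for a d
  proof -
    have e: "(adj B ** X ** B) $ a $ d = (\<Sum>b\<in>UNIV. \<Sum>c\<in>UNIV. X $ b $ c * (cnj (B $ b $ a) * B $ c $ d))" for B
      by (simp add: mmult_nth sum_distrib_right sum_distrib_left algebra_simps) (rule sum.swap)
    have "(\<Sum>i\<in>I. twirl (Bs i) X) $ a $ d = (\<Sum>i\<in>I. \<Sum>B\<in>Bs i. \<Sum>b\<in>UNIV. \<Sum>c\<in>UNIV. X $ b $ c * (cnj (B $ b $ a) * B $ c $ d))"
      by (simp add: twirl_def sum_component e)
    also have "\<dots> = (\<Sum>b\<in>UNIV. \<Sum>c\<in>UNIV. X $ b $ c * (\<Sum>i\<in>I. \<Sum>B\<in>Bs i. cnj (B $ b $ a) * B $ c $ d))"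
      by (simp add: sum_distrib_left sum.swap[of _ I] sum.swap[of _ "Bs _"])
    also have "\<dots> = (\<Sum>b\<in>UNIV. \<Sum>c\<in>UNIV. X $ b $ c * (if c = b \<and> d = a then 1 else 0))"
      by (simp add: completeness_entry[OF fin od onb])
    also have "\<dots> = mscale (trace X) (mat 1) $ a $ d"
      by (simp add: trace_def mat_nth if_distrib cong: if_cong)
    finally show ?thesis .
  qed
  then show ?thesis by (simp add: vec_eq_iff)
qed



lemma hs_BP:
  assumes aP: "adj P = P" and PP: "P ** P = P"
  shows "hs B P = hs (P ** B ** P) P"
proof -
  have "hs (P ** B ** P) P = trace (P ** adj B ** P ** P)"
    unfolding hs_def adj_mult aP by (simp add: matrix_mul_assoc)
  also have "\<dots> = trace (P ** (adj B ** P))"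
    by (simp add: matrix_mul_assoc[symmetric] PP)
  also have "\<dots> = trace (adj B ** P ** P)"
    by (rule trace_mul_sym)
  also have "\<dots> = hs B P"
    by (simp add: hs_def matrix_mul_assoc[symmetric] PP)
  finally show ?thesis by (rule sym)
qed

lemma hs_PtwP:
  assumes aP: "adj P = P" and PP: "P ** P = P"
  shows "hs P (adj B ** P ** B) = hs (P ** B ** P) (P ** B ** P)"
proof -
  have "hs (P ** B ** P) (P ** B ** P) = trace (P ** adj B ** P ** (P ** B ** P))"
    unfolding hs_def adj_mult aP by (simp add: matrix_mul_assoc)
  also have "\<dots> = trace ((P ** adj B ** P ** B) ** P)"
  proof -
    have PP': "X ** P ** P = X ** P" for X by (simp add: matrix_mul_assoc[symmetric] PP)
    show ?thesis by (simp add: matrix_mul_assoc PP')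
  qed
  also have "\<dots> = trace (P ** (P ** adj B ** P ** B))"
    by (rule trace_mul_sym)
  also have "\<dots> = hs P (adj B ** P ** B)"
    by (simp add: hs_def matrix_mul_assoc PP aP)
  finally show ?thesis by (rule sym)
qed

lemma cs_scaled:
  "cmod (hs (mscale c P) P) ^ 2 = nm P * nm (mscale c P)"
proof -
  have "complex_of_real (nm (mscale c P)) = complex_of_real ((cmod c)^2 * nm P)"
  proof -
    have sq: "cnj c * c = (complex_of_real (cmod c))^2" using complex_norm_square[of c] by (simp add: mult.commute)
    have "complex_of_real (nm (mscale c P)) = cnj c * c * complex_of_real (nm P)"
      by (simp add: hs_self[symmetric] hs_scale1 hs_scale2)
    then show ?thesis by (simp add: sq)
  qed
  then have e: "nm (mscale c P) = (cmod c)^2 * nm P" by (simp only: of_real_eq_iff)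
  have "hs (mscale c P) P = cnj c * complex_of_real (nm P)" by (simp add: hs_scale1 hs_self)
  then have "cmod (hs (mscale c P) P) = cmod c * nm P" by (simp add: norm_mult nm_nonneg)
  then show ?thesis by (simp add: e power2_eq_square)
qed

lemma cs:
  fixes M P :: "complex^'n^'n"
  shows "cmod (hs M P) ^ 2 \<le> nm P * nm M"
    and "nm P \<noteq> 0 \<Longrightarrow> (cmod (hs M P) ^ 2 = nm P * nm M \<longleftrightarrow> (\<exists>c. M = mscale c P))"
proof -
  have key: "nm (M - mscale (hs P M / complex_of_real (nm P)) P) = nm M - cmod (hs M P)^2 / nm P"
    if p0: "nm P \<noteq> 0"
  proof -
    define u where "u = hs P M"
    define p where "p = nm P"
    define t where "t = u / complex_of_real p"
    have pc: "complex_of_real p \<noteq> 0" using p0 p_def by simp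
    have hMP: "hs M P = cnj u" unfolding u_def by (rule hs_cnj)
    have "complex_of_real (nm (M - mscale t P)) = hs (M - mscale t P) (M - mscale t P)"
      by (simp add: hs_self)
    also have "\<dots> = hs M M - t * hs M P - cnj t * hs P M + cnj t * t * hs P P"
      by (simp only: hs_diff1 hs_diff2 hs_scale1 hs_scale2) (simp add: algebra_simps)
    also have "\<dots> = complex_of_real (nm M) - t * cnj u - cnj t * u + cnj t * t * complex_of_real p"
      by (simp only: hs_self[of M] hs_self[of P] hMP p_def u_def)
    also have "\<dots> = complex_of_real (nm M) - u * cnj u / complex_of_real p"
    proof -
      have ct: "cnj t = cnj u / complex_of_real p" unfolding t_def by simp
      have e1: "t * cnj u = u * cnj u / complex_of_real p" unfolding t_def by simp
      have e2: "cnj t * u = u * cnj u / complex_of_real p" unfolding ct by (simp add: mult.commute)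
      have e3: "cnj t * t * complex_of_real p = u * cnj u / complex_of_real p"
        unfolding ct t_def using pc by (simp add: divide_simps)
      show ?thesis unfolding e1 e2 e3 by simp
    qed
    also have "\<dots> = complex_of_real (nm M - cmod u ^2 / p)"
      by (simp add: complex_norm_square[symmetric])
    finally show ?thesis unfolding t_def u_def p_def
      by (simp only: of_real_eq_iff) (simp add: hs_cnj[of M P])
  qed
  show "cmod (hs M P) ^ 2 \<le> nm P * nm M"
  proof (cases "nm P = 0")
    case True
    then have "P = 0" by (simp add: nm_zero)
    then show ?thesis by (simp add: hs_zero2 nm_def)
  next
    case False
    have pp: "nm P > 0" using False nm_nonneg[of P] by linarith
    have "0 \<le> nm (M - mscale (hs P M / complex_of_real (nm P)) P)" by (rule nm_nonneg)
    then have "0 \<le> nm M - cmod (hs M P)^2 / nm P" unfolding key[OF False] .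
    then show ?thesis using pp by (simp add: field_simps)
  qed
  assume p0: "nm P \<noteq> 0"
  have pp: "nm P > 0" using p0 nm_nonneg[of P] by linarith
  show "cmod (hs M P) ^ 2 = nm P * nm M \<longleftrightarrow> (\<exists>c. M = mscale c P)"
  proof
    assume "cmod (hs M P) ^ 2 = nm P * nm M"
    then have "nm M - cmod (hs M P)^2 / nm P = 0" using pp by (simp add: field_simps)
    then have "M - mscale (hs P M / complex_of_real (nm P)) P = 0"
      using key[OF p0] nm_zero[of "M - mscale (hs P M / complex_of_real (nm P)) P"] by simp
    then show "\<exists>c. M = mscale c P" by auto
  next
    assume "\<exists>c. M = mscale c P"
    then obtain c where "M = mscale c P" by blast
    then show "cmod (hs M P) ^ 2 = nm P * nm M" using cs_scaled[of c P] by simp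
  qed
qed



lemma detects_iff:
  assumes sub: "msubspace S" and onb: "orthonormal_basis Bs S"
  shows "detects P S \<longleftrightarrow> (\<forall>B\<in>Bs. \<exists>c. P ** B ** P = mscale c P)"
proof
  assume "detects P S"
  then show "\<forall>B\<in>Bs. \<exists>c. P ** B ** P = mscale c P"
    using onb_props(2)[OF onb] unfolding detects_def by blast
next
  assume "\<forall>B\<in>Bs. \<exists>c. P ** B ** P = mscale c P"
  then obtain f where f: "\<forall>B\<in>Bs. P ** B ** P = mscale (f B) P" by metis
  show "detects P S" unfolding detects_def
  proof
    fix Z assume "Z \<in> S"
    then have Z: "Z = (\<Sum>B\<in>Bs. mscale (hs B Z) B)"
      using mspan_expand[OF onb] onb_props(3)[OF onb] by auto
    have "P ** Z ** P = (\<Sum>B\<in>Bs. mscale (hs B Z) (P ** B ** P))"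
      by (subst Z) (simp add: mult_sum_left mult_sum_right mscale_mult_left mscale_mult_right)
    also have "\<dots> = (\<Sum>B\<in>Bs. mscale (hs B Z * f B) P)"
      using f by (intro sum.cong) auto
    also have "\<dots> = mscale (\<Sum>B\<in>Bs. hs B Z * f B) P"
      by (rule mscale_sum)
    finally show "\<exists>c. P ** Z ** P = mscale c P" by blast
  qed
qed

lemma mscale_one[simp]: "mscale 1 X = X"
  by (simp add: vec_eq_iff)

lemma mspan_single: "X \<in> mspan {A} \<longleftrightarrow> (\<exists>c. X = mscale c A)"
  unfolding mspan_def by auto

lemma cle_of_real: "complex_of_real x \<le> complex_of_real y \<longleftrightarrow> x \<le> y"
  by (simp add: less_eq_complex_def)

theorem mainTheorem4:
  fixes I :: "'i set"
    and E :: "'i \<Rightarrow> (complex^'n^'n) set"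
    and Bs :: "'i \<Rightarrow> (complex^'n^'n) set"
    and C :: "(complex^'n) set"
    and P :: "complex^'n^'n"
    and K :: nat
  assumes "finite I"
    and "orth_decomp I E"
    and "\<And>i. i \<in> I \<Longrightarrow> orthonormal_basis (Bs i) (E i)"
    and "vec.subspace C"
    and "K = vec.dim C"
    and "is_orth_projector P C"
  shows "(\<forall>i\<in>I. 0 \<le> Aform (E i) P P)
    \<and> (\<Sum>i\<in>I. Aform (E i) P P) = of_nat K
    \<and> (\<Sum>i\<in>I. Bform (Bs i) P P) = of_nat K ^ 2
    \<and> (\<forall>i0\<in>I. E i0 = mspan {mat 1} \<longrightarrow>
          Aform (E i0) P P = of_nat K ^ 2 / of_nat CARD('n)
        \<and> Bform (Bs i0) P P = of_nat K / of_nat CARD('n))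
    \<and> (\<forall>i\<in>I. Aform (E i) P P \<le> of_nat K * Bform (Bs i) P P
        \<and> (Aform (E i) P P = of_nat K * Bform (Bs i) P P \<longleftrightarrow> detects P (E i)))"
proof -
  note fin = assms(1) and od = assms(2) and onb = assms(3)
  have sub: "\<And>i. i \<in> I \<Longrightarrow> msubspace (E i)" using od unfolding orth_decomp_def by auto
  have aP: "adj P = P" and PP: "P ** P = P" and rng: "range (\<lambda>v. P *v v) = C"
    using assms(6) unfolding is_orth_projector_def by auto
  have trP: "trace P = of_nat K" using trace_idem_dim[OF PP rng] assms(5) by simp
  have hsPP: "hs P P = of_nat K" unfolding hs_def aP PP trP ..
  have nmP: "nm P = real K" using hsPP hs_self[of P] by (metis of_real_eq_iff of_real_of_nat_eq)
  have hsP1: "hs P (mat 1) = trace P" by (simp add: hs_def aP)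
  define M where "M B = P ** B ** P" for B
  have Aeq: "Aform (E i) P P = complex_of_real (\<Sum>B\<in>Bs i. cmod (hs (M B) P) ^ 2)" if i: "i \<in> I" for i
  proof -
    have "Aform (E i) P P = (\<Sum>B\<in>Bs i. hs B P * hs P B)"
      unfolding Aform_def proj_formula[OF sub[OF i] onb[OF i]] hs_sum2 hs_scale2 ..
    also have "\<dots> = (\<Sum>B\<in>Bs i. complex_of_real (cmod (hs (M B) P) ^ 2))"
    proof (rule sum.cong[OF refl])
      fix B
      have "hs B P * hs P B = hs B P * cnj (hs B P)" by (simp add: hs_cnj[of P B])
      also have "\<dots> = complex_of_real (cmod (hs B P) ^ 2)" by (rule complex_norm_square[symmetric])
      finally show "hs B P * hs P B = complex_of_real (cmod (hs (M B) P) ^ 2)"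
        unfolding M_def hs_BP[OF aP PP, of B, symmetric] .
    qed
    finally show ?thesis by simp
  qed
  have Beq: "Bform (Bs i) P P = complex_of_real (\<Sum>B\<in>Bs i. nm (M B))" for i
  proof -
    have "Bform (Bs i) P P = (\<Sum>B\<in>Bs i. hs P (adj B ** P ** B))"
      unfolding Bform_def twirl_def hs_sum2 ..
    also have "\<dots> = (\<Sum>B\<in>Bs i. complex_of_real (nm (M B)))"
      by (intro sum.cong) (simp_all add: hs_PtwP[OF aP PP] hs_self M_def)
    finally show ?thesis by simp
  qed
  have part1: "\<forall>i\<in>I. 0 \<le> Aform (E i) P P"
    using Aeq by (simp add: less_eq_complex_def sum_nonneg)
  have part2: "(\<Sum>i\<in>I. Aform (E i) P P) = of_nat K"
  proof -
    have "(\<Sum>i\<in>I. Aform (E i) P P) = hs P (\<Sum>i\<in>I. orth_proj (E i) P)"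
      by (simp add: Aform_def hs_sum2)
    also have "\<dots> = hs P P" using sum_proj[OF fin od onb, of P] by simp
    finally show ?thesis using hsPP by simp
  qed
  have part3: "(\<Sum>i\<in>I. Bform (Bs i) P P) = of_nat K ^ 2"
  proof -
    have "(\<Sum>i\<in>I. Bform (Bs i) P P) = hs P (\<Sum>i\<in>I. twirl (Bs i) P)"
      by (simp add: Bform_def hs_sum2)
    also have "\<dots> = hs P (mscale (trace P) (mat 1))" using twirl_sum[OF fin od onb, of P] by simp
    finally show ?thesis by (simp add: hs_scale2 hsP1 trP power2_eq_square)
  qed
  have part4: "\<forall>i0\<in>I. E i0 = mspan {mat 1} \<longrightarrow>
          Aform (E i0) P P = of_nat K ^ 2 / of_nat CARD('n)
        \<and> Bform (Bs i0) P P = of_nat K / of_nat CARD('n)"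
  proof (intro ballI impI)
    fix i0 assume i0: "i0 \<in> I" and Ei0: "E i0 = mspan {mat 1}"
    define n where "n = (of_nat CARD('n) :: complex)"
    have n0: "n \<noteq> 0" unfolding n_def by simp
    have hs11: "hs (mat 1) (mat 1 :: complex^'n^'n) = n" unfolding hs_mat1 trace_mat1 n_def ..
    define Y where "Y = mscale (trace P / n) (mat 1 :: complex^'n^'n)"
    have "orth_proj (E i0) P = Y"
    proof (rule proj_unique[OF sub[OF i0] onb[OF i0]])
      show "Y \<in> E i0" unfolding Ei0 mspan_single Y_def by blast
      show "\<forall>Z\<in>E i0. hs Z (P - Y) = 0"
      proof
        fix Z assume "Z \<in> E i0"
        then obtain c where Z: "Z = mscale c (mat 1)" unfolding Ei0 mspan_single by blast
        show "hs Z (P - Y) = 0"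
          unfolding Z Y_def hs_scale1 hs_diff2 hs_scale2 hs11 using n0 by (simp add: hs_mat1)
      qed
    qed
    then have A: "Aform (E i0) P P = trace P / n * trace P"
      by (simp add: Aform_def hs_scale2 hsP1 Y_def)
    have Bprops: "adj B ** P ** B = mscale (1 / n) P \<and> mscale (hs B (mat 1)) B = mat 1"
      if B: "B \<in> Bs i0" for B
    proof -
      have "B \<in> E i0" using onb_props(2)[OF onb[OF i0]] B by auto
      then obtain c where Bc: "B = mscale c (mat 1)" unfolding Ei0 mspan_single by blast
      have "hs B B = 1" using onb_props(4)[OF onb[OF i0] B B] by simp
      then have cc: "cnj c * c * n = 1" unfolding Bc hs_scale1 hs_scale2 hs11 by (simp add: algebra_simps)
      then have cc': "cnj c * c = 1 / n" using n0 by (simp add: field_simps)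
      have "adj B ** P ** B = mscale (cnj c * c) P"
        unfolding Bc adj_mscale adj_mat1 mscale_mult_left mscale_mult_right matrix_mul_lid
        by (simp add: matrix_mul_rid mult.commute)
      moreover have "mscale (hs B (mat 1)) B = mat 1"
      proof -
        have "hs B (mat 1) = cnj c * n" unfolding Bc hs_scale1 hs11 ..
        then have "mscale (hs B (mat 1)) B = mscale (cnj c * c * n) (mat 1)"
          unfolding Bc by (simp add: mult.commute mult.left_commute)
        then show ?thesis using cc by simp
      qed
      ultimately show ?thesis using cc' by simp
    qed
    have "mat 1 \<in> E i0" unfolding Ei0 mspan_single by (rule exI[of _ 1]) (simp add: vec_eq_iff)
    then have "mat 1 = (\<Sum>B\<in>Bs i0. mscale (hs B (mat 1)) B)"
      using mspan_expand[OF onb[OF i0]] onb_props(3)[OF onb[OF i0]] by auto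
    also have "\<dots> = (\<Sum>B\<in>Bs i0. mat 1)" using Bprops by (intro sum.cong) auto
    finally have "(mat 1 :: complex^'n^'n) $ undefined $ undefined = (\<Sum>B\<in>Bs i0. mat 1 :: complex^'n^'n) $ undefined $ undefined"
      by simp
    then have "(1::complex) = (\<Sum>B\<in>Bs i0. (1::complex))" by (simp only: sum_component mat_nth refl if_True)
    then have "of_nat (card (Bs i0)) = (1::complex)" by simp
    then have card1: "card (Bs i0) = 1" by (metis of_nat_1 of_nat_eq_iff)
    have "Bform (Bs i0) P P = (\<Sum>B\<in>Bs i0. hs P (mscale (1 / n) P))"
      unfolding Bform_def twirl_def hs_sum2 using Bprops by (intro sum.cong) auto
    also have "\<dots> = of_nat K / n" using card1 by (simp add: hs_scale2 hsPP)
    finally show "Aform (E i0) P P = of_nat K ^ 2 / of_nat CARD('n) \<and> Bform (Bs i0) P P = of_nat K / of_nat CARD('n)"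
      using A unfolding n_def trP by (simp add: power2_eq_square)
  qed
  have part5: "\<forall>i\<in>I. Aform (E i) P P \<le> of_nat K * Bform (Bs i) P P
        \<and> (Aform (E i) P P = of_nat K * Bform (Bs i) P P \<longleftrightarrow> detects P (E i))"
  proof (intro ballI)
    fix i assume i: "i \<in> I"
    define a where "a B = cmod (hs (M B) P)^2" for B
    define b where "b B = real K * nm (M B)" for B
    have finB: "finite (Bs i)" using onb_props(1)[OF onb[OF i]] .
    have ab: "a B \<le> b B" for B using cs(1)[of "M B" P] nmP unfolding a_def b_def by simp
    have A: "Aform (E i) P P = complex_of_real (sum a (Bs i))" using Aeq[OF i] unfolding a_def .
    have KB: "of_nat K * Bform (Bs i) P P = complex_of_real (sum b (Bs i))"
      unfolding Beq b_def by (simp add: sum_distrib_left)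
    have le: "Aform (E i) P P \<le> of_nat K * Bform (Bs i) P P"
      unfolding A KB cle_of_real by (rule sum_mono) (rule ab)
    have "Aform (E i) P P = of_nat K * Bform (Bs i) P P \<longleftrightarrow> sum a (Bs i) = sum b (Bs i)"
      unfolding A KB of_real_eq_iff ..
    also have "\<dots> \<longleftrightarrow> (\<Sum>B\<in>Bs i. b B - a B) = 0"
      by (auto simp add: sum_subtractf)
    also have "\<dots> \<longleftrightarrow> (\<forall>B\<in>Bs i. b B - a B = 0)"
      using finB ab by (intro sum_nonneg_eq_0_iff) auto
    also have "\<dots> \<longleftrightarrow> detects P (E i)"
    proof (cases "K = 0")
      case True
      then have P0: "P = 0" using nmP nm_zero[of P] by simp
      have "b B - a B = 0" for B unfolding a_def b_def M_def P0 True by (simp add: hs_zero2)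
      moreover have "detects P (E i)" unfolding detects_def P0
        by (auto intro!: exI[of _ 0] simp: vec_eq_iff mmult_nth)
      ultimately show ?thesis by simp
    next
      case False
      then have nP: "nm P \<noteq> 0" using nmP by simp
      have "(b B - a B = 0) \<longleftrightarrow> (\<exists>c. M B = mscale c P)" for B
        using cs(2)[OF nP, of "M B"] nmP unfolding a_def b_def by auto
      then show ?thesis using detects_iff[OF sub[OF i] onb[OF i]] unfolding M_def by simp
    qed
    finally show "Aform (E i) P P \<le> of_nat K * Bform (Bs i) P P
        \<and> (Aform (E i) P P = of_nat K * Bform (Bs i) P P \<longleftrightarrow> detects P (E i))"
      using le by simp
  qed
  show ?thesis using part1 part2 part3 part4 part5 by blast
qed


end
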